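(* Let $m\ge1$ and $A\ge1$ be integers, and let $\alpha\neq\beta$ be elements of $\mathbb{Z}[\zeta_m]$ whose representations are bounded in $[-A,A]$. Then $$|\alpha-\beta|\ge\frac{1}{(2A\,\phi(m)+1)^{\phi(m)-1}}.$$
   Context: $\zeta_m$ is a primitive $m$-th root of unity and $\phi$ is Euler's totient function. The representation of $\alpha\in\mathbb{Z}[\zeta_m]$ is the unique tuple of integers $(a_0,\dots,a_{\phi(m)-1})$ with $\alpha=\sum_{i=0}^{\phi(m)-1}a_i\zeta_m^i$; it is bounded in $[-A,A]$ if $-A\le a_i\le A$ for all $i$. *)

theory Defs
  imports "HOL-Analysis.Analysis" "HOL-Number_Theory.Number_Theory"
begin

definition cyc_elem :: "nat \<Rightarrow> complex \<Rightarrow> (nat \<Rightarrow> int) \<Rightarrow> complex" where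
  "cyc_elem m z a = (\<Sum>i<totient m. of_int (a i) * z ^ i)"

end

theory Submission imports Defs "Berlekamp_Zassenhaus.Berlekamp_Zassenhaus" begin


fun hmat :: "complex list \<Rightarrow> complex mat \<Rightarrow> nat \<Rightarrow> complex mat" where
  "hmat [] M d = 0\<^sub>m d d"
| "hmat (c # cs) M d = c \<cdot>\<^sub>m 1\<^sub>m d + M * hmat cs M d"

fun horner :: "complex list \<Rightarrow> complex \<Rightarrow> complex" where
  "horner [] x = 0"
| "horner (c # cs) x = c + x * horner cs x"

lemma hmat_carrier: "M \<in> carrier_mat d d \<Longrightarrow> hmat cs M d \<in> carrier_mat d d"
  by (induct cs) auto

lemma hmat_ints:
  assumes M: "M \<in> carrier_mat d d" and Mi: "\<forall>i<d. \<forall>j<d. M $$ (i,j) \<in> \<int>"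
    and cs: "set cs \<subseteq> \<int>"
  shows "\<forall>i<d. \<forall>j<d. hmat cs M d $$ (i,j) \<in> \<int>"
  using cs
proof (induct cs)
  case Nil then show ?case by auto
next
  case (Cons c cs)
  have H: "hmat cs M d \<in> carrier_mat d d" using hmat_carrier[OF M] .
  show ?case
  proof (intro allI impI)
    fix i j assume i: "i < d" and j: "j < d"
    have "(M * hmat cs M d) $$ (i,j) = (\<Sum>l\<in>{0..<d}. M $$ (i,l) * hmat cs M d $$ (l,j))"
      using M H i j by (auto simp: scalar_prod_def)
    also have "\<dots> \<in> \<int>" using Cons Mi i j by (intro Ints_sum Ints_mult) auto
    finally have "(M * hmat cs M d) $$ (i,j) \<in> \<int>" .
    then show "hmat (c # cs) M d $$ (i, j) \<in> \<int>" using Cons M H i j by auto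
  qed
qed

lemma hmat_eig:
  assumes M: "M \<in> carrier_mat d d"
    and ev: "\<And>p. p < d \<Longrightarrow> (\<Sum>l<d. w ^ l * M $$ (l,p)) = w ^ (Suc p)"
  shows "\<forall>k<d. (\<Sum>l<d. w ^ l * hmat cs M d $$ (l,k)) = horner cs w * w ^ k"
proof (induct cs)
  case Nil then show ?case by auto
next
  case (Cons c cs)
  have H: "hmat cs M d \<in> carrier_mat d d" using hmat_carrier[OF M] .
  show ?case
  proof (intro allI impI)
    fix k assume k: "k < d"
    have e: "hmat (c # cs) M d $$ (l,k) = c * (if l = k then 1 else 0) + (\<Sum>p<d. M $$ (l,p) * hmat cs M d $$ (p,k))"
      if l: "l < d" for l
      using M H l k by (auto simp: scalar_prod_def atLeast0LessThan)
    have "(\<Sum>l<d. w ^ l * hmat (c # cs) M d $$ (l,k))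
       = (\<Sum>l<d. c * (if l = k then w ^ l else 0)) + (\<Sum>l<d. \<Sum>p<d. w ^ l * M $$ (l,p) * hmat cs M d $$ (p,k))"
    proof -
      have "(\<Sum>l<d. w ^ l * hmat (c # cs) M d $$ (l,k)) = (\<Sum>l<d. c * (if l = k then w ^ l else 0) + (\<Sum>p<d. w ^ l * M $$ (l,p) * hmat cs M d $$ (p,k)))"
        by (intro sum.cong refl) (simp del: hmat.simps add: e distrib_left sum_distrib_left mult.assoc)
      then show ?thesis by (simp add: sum.distrib)
    qed
    also have "(\<Sum>l<d. c * (if l = k then w ^ l else 0)) = c * w ^ k"
      using k by (simp add: sum.delta' flip: sum_distrib_left)
    also have "(\<Sum>l<d. \<Sum>p<d. w ^ l * M $$ (l,p) * hmat cs M d $$ (p,k))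
        = (\<Sum>p<d. (\<Sum>l<d. w ^ l * M $$ (l,p)) * hmat cs M d $$ (p,k))"
      by (subst sum.swap) (simp add: sum_distrib_right)
    also have "\<dots> = (\<Sum>p<d. w * (w ^ p * hmat cs M d $$ (p,k)))"
      by (intro sum.cong refl) (simp add: ev mult.assoc)
    also have "\<dots> = w * (horner cs w * w ^ k)"
      using Cons k by (simp flip: sum_distrib_left)
    finally show "(\<Sum>l<d. w ^ l * hmat (c # cs) M d $$ (l,k)) = horner (c # cs) w * w ^ k"
      by (simp add: algebra_simps)
  qed
qed

lemma vandermonde_det_nz:
  fixes ws :: "complex list"
  assumes dist: "distinct ws" and len: "length ws = d"
  shows "det (mat d d (\<lambda>(j,k). ws ! j ^ k)) \<noteq> 0"
proof
  let ?W = "mat d d (\<lambda>(j,k). ws ! j ^ k)"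
  assume "det ?W = 0"
  then obtain v where v: "v \<in> carrier_vec d" "v \<noteq> 0\<^sub>v d" "?W *\<^sub>v v = 0\<^sub>v d"
    using det_0_iff_vec_prod_zero_field[of ?W d] by auto
  define q where "q = (\<Sum>k<d. Polynomial.monom (vec_index v k) k)"
  have pq: "poly q x = (\<Sum>k<d. vec_index v k * x ^ k)" for x
    unfolding q_def by (simp add: poly_sum poly_monom)
  have cq: "Polynomial.coeff q i = (if i < d then vec_index v i else 0)" for i
    unfolding q_def by (simp add: coeff_sum coeff_monom)
  obtain i where i: "i < d" "vec_index v i \<noteq> 0" using v(1,2)
    by (metis carrier_vecD eq_vecI index_zero_vec(1) index_zero_vec(2))
  then have q0: "q \<noteq> 0" using cq[of i] by auto
  have dq: "degree q < d"
  proof -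
    have "degree q \<le> d - 1" by (rule degree_le) (use cq i in auto)
    then show ?thesis using i by auto
  qed
  have "set ws \<subseteq> {x. poly q x = 0}"
  proof
    fix x assume "x \<in> set ws"
    then obtain j where j: "j < d" "x = ws ! j" using len by (auto simp: in_set_conv_nth)
    have "vec_index (?W *\<^sub>v v) j = 0" using v(3) j by simp
    moreover have "vec_index (?W *\<^sub>v v) j = (\<Sum>k<d. vec_index v k * x ^ k)"
      using j v(1) by (auto simp: scalar_prod_def atLeast0LessThan mult.commute intro!: sum.cong)
    ultimately show "x \<in> {x. poly q x = 0}" by (simp add: pq)
  qed
  then have "card (set ws) \<le> card {x. poly q x = 0}"
    using poly_roots_finite[OF q0] by (rule card_mono[rotated])
  also have "\<dots> \<le> degree q" by (rule card_poly_roots_bound[OF q0])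
  finally show False using dq dist len distinct_card by fastforce
qed

lemma prod_roots_int:
  fixes f :: "int poly" and cs ws :: "complex list"
  assumes lc: "lead_coeff f = 1" and dist: "distinct ws" and len: "length ws = degree f"
    and roots: "\<forall>w\<in>set ws. poly (of_int_poly f) w = 0" and cs: "set cs \<subseteq> \<int>"
  shows "prod_list (map (horner cs) ws) \<in> \<int>"
proof -
  define d where "d = degree f"
  define M :: "complex mat" where "M = mat d d (\<lambda>(i,k). if k + 1 < d then (if i = k + 1 then 1 else 0) else - of_int (Polynomial.coeff f i))"
  define W :: "complex mat" where "W = mat d d (\<lambda>(j,k). ws ! j ^ k)"
  define H where "H = hmat cs M d"
  define Dg :: "complex mat" where "Dg = mat d d (\<lambda>(i,j). if i = j then horner cs (ws ! i) else 0)"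
  have M: "M \<in> carrier_mat d d" unfolding M_def by simp
  have H: "H \<in> carrier_mat d d" unfolding H_def by (rule hmat_carrier[OF M])
  have W: "W \<in> carrier_mat d d" unfolding W_def by simp
  have Dg: "Dg \<in> carrier_mat d d" unfolding Dg_def by simp
  have Mi: "\<forall>i<d. \<forall>j<d. M $$ (i,j) \<in> \<int>" unfolding M_def by auto
  have Hi: "\<forall>i<d. \<forall>j<d. H $$ (i,j) \<in> \<int>" unfolding H_def by (rule hmat_ints[OF M Mi cs])
  have ev: "(\<Sum>l<d. w ^ l * M $$ (l,p)) = w ^ (Suc p)" if w: "w \<in> set ws" and p: "p < d" for w p
  proof (cases "p + 1 < d")
    case True
    then have "(\<Sum>l<d. w ^ l * M $$ (l,p)) = (\<Sum>l<d. if l = p + 1 then w ^ l else 0)"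
      unfolding M_def by (intro sum.cong refl) auto
    also have "\<dots> = w ^ Suc p" using True by (simp add: sum.delta')
    finally show ?thesis .
  next
    case False
    then have Sp: "Suc p = d" using p by auto
    have "(\<Sum>l<d. w ^ l * M $$ (l,p)) = - (\<Sum>l<d. of_int (Polynomial.coeff f l) * w ^ l)"
      unfolding M_def using False p by (auto simp: sum_negf[symmetric] mult.commute intro!: sum.cong)
    also have "\<dots> = w ^ d"
    proof -
      have "0 = poly (of_int_poly f) w" using roots w by auto
      also have "\<dots> = (\<Sum>i\<le>d. of_int (Polynomial.coeff f i) * w ^ i)"
        by (simp add: poly_altdef d_def)
      also have "\<dots> = (\<Sum>i<d. of_int (Polynomial.coeff f i) * w ^ i) + w ^ d"
        using lc by (simp add: lessThan_Suc_atMost[symmetric] d_def)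
      finally show ?thesis by (metis add.commute add_eq_0_iff)
    qed
    finally show ?thesis using Sp by simp
  qed
  have eq: "W * H = Dg * W"
  proof (rule eq_matI)
    fix j k assume j: "j < dim_row (Dg * W)" and k: "k < dim_col (Dg * W)"
    then have j: "j < d" and k: "k < d" using Dg W by auto
    have wj: "ws ! j \<in> set ws" using j len d_def by auto
    have "(W * H) $$ (j,k) = (\<Sum>l<d. ws ! j ^ l * H $$ (l,k))"
      using W H j k by (auto simp: scalar_prod_def atLeast0LessThan W_def intro!: sum.cong)
    also have "\<dots> = horner cs (ws ! j) * ws ! j ^ k"
      using hmat_eig[OF M ev[OF wj], of cs] k unfolding H_def by auto
    also have "\<dots> = (Dg * W) $$ (j,k)"
    proof -
      have "(Dg * W) $$ (j,k) = (\<Sum>l<d. (if j = l then horner cs (ws ! j) else 0) * ws ! l ^ k)"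
        using W Dg j k by (auto simp: scalar_prod_def atLeast0LessThan W_def Dg_def intro!: sum.cong)
      also have "\<dots> = (\<Sum>l<d. if l = j then horner cs (ws ! j) * ws ! l ^ k else 0)"
        by (intro sum.cong refl) auto
      also have "\<dots> = horner cs (ws ! j) * ws ! j ^ k" using j by (simp add: sum.delta')
      finally show ?thesis by simp
    qed
    finally show "(W * H) $$ (j,k) = (Dg * W) $$ (j,k)" .
  qed (use W H Dg in auto)
  have "det W * det H = det Dg * det W"
    using arg_cong[OF eq, of det] det_mult[OF W H] det_mult[OF Dg W] by simp
  moreover have "det W \<noteq> 0" unfolding W_def by (rule vandermonde_det_nz[OF dist]) (simp add: len d_def)
  ultimately have dH: "det H = det Dg" by simp
  have "det Dg = prod_list (diag_mat Dg)"
    by (rule det_upper_triangular[OF _ Dg]) (auto simp: upper_triangular_def Dg_def)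
  also have "\<dots> = prod_list (map (horner cs) ws)"
  proof -
    have "diag_mat Dg = map (\<lambda>i. horner cs (ws ! i)) [0..<length ws]"
      unfolding diag_mat_def Dg_def by (auto simp: len d_def)
    also have "\<dots> = map (horner cs) ws" by (rule nth_equalityI) auto 
    finally show ?thesis by simp
  qed
  finally have "prod_list (map (horner cs) ws) = det H" using dH by simp
  also have "det H \<in> \<int>"
    unfolding det_def' [OF H] using Hi
    by (intro Ints_sum Ints_mult Ints_prod) (auto simp: permutes_def)
  finally show ?thesis .
qed



interpretation ofr: field_hom' "of_rat :: rat \<Rightarrow> complex" by standard

lemma of_int_poly_rat_complex: "map_poly (of_rat :: rat \<Rightarrow> complex) (of_int_poly p) = of_int_poly p"
  by (subst map_poly_map_poly) (auto simp: comp_def)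

lemma irr_common_root:
  fixes f g :: "int poly" and w :: complex
  assumes irr: "irreducible f" and rf: "poly (of_int_poly f) w = 0" and rg: "poly (of_int_poly g) w = 0"
  shows "f dvd g"
proof -
  define G where "G = gcd f g"
  have f0: "f \<noteq> 0" using irr by auto
  then have G0: "G \<noteq> 0" unfolding G_def by auto
  then have lc0: "lead_coeff G \<noteq> 0" by auto
  have "gcd (of_int_poly f :: complex poly) (of_int_poly g)
      = map_poly of_rat (gcd (of_int_poly f :: rat poly) (of_int_poly g))"
    by (simp add: ofr.map_poly_gcd of_int_poly_rat_complex)
  also have "\<dots> = map_poly of_rat (Polynomial.smult (inverse (of_int (lead_coeff G))) (of_int_poly G :: rat poly))"
    unfolding gcd_rat_to_gcd_int G_def ..
  also have "\<dots> = Polynomial.smult (inverse (of_int (lead_coeff G))) (of_int_poly G)"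
    by (intro poly_eqI) (simp add: coeff_map_poly of_rat_mult of_rat_inverse)
  finally have gc: "gcd (of_int_poly f :: complex poly) (of_int_poly g) = Polynomial.smult (inverse (of_int (lead_coeff G))) (of_int_poly G)" .
  have "[:-w,1:] dvd gcd (of_int_poly f :: complex poly) (of_int_poly g)"
    using rf rg by (simp add: poly_eq_0_iff_dvd)
  then have "poly (gcd (of_int_poly f :: complex poly) (of_int_poly g)) w = 0"
    by (simp add: poly_eq_0_iff_dvd)
  then have rG: "poly (of_int_poly G) w = 0" using lc0 unfolding gc by simp
  have nu: "\<not> G dvd 1"
  proof
    assume "G dvd 1"
    then obtain c where c: "G = [:c:]" "c dvd 1" by (auto simp: is_unit_poly_iff)
    then have "c = 1 \<or> c = -1" by auto
    then show False using rG c by auto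
  qed
  have "G dvd f" unfolding G_def by simp
  then obtain h where fh: "f = G * h" by (auto elim: dvdE)
  from irreducibleD[OF irr fh] nu have hu: "h dvd 1" by auto
  have "f dvd G" using hu fh by (simp add: dvd_mult_unit_iff)
  also have "G dvd g" unfolding G_def by simp
  finally show ?thesis .
qed

definition Xm :: "nat \<Rightarrow> int poly" where "Xm k = Polynomial.monom 1 k - 1"

lemma coeff_Xm: "Polynomial.coeff (Xm k) i = (if i = k then 1 else 0) - (if i = 0 then 1 else 0)"
  unfolding Xm_def by (simp only: coeff_diff coeff_monom coeff_1) (auto)

lemma of_int_Xm: "(of_int_poly (Xm k) :: complex poly) = Polynomial.monom 1 k - 1"
  by (rule poly_eqI) (simp only: coeff_map_poly coeff_Xm coeff_diff coeff_monom coeff_1 of_int_0 of_int_1 of_int_diff, auto)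

lemma poly_Xm: "poly (of_int_poly (Xm k)) (w :: complex) = w ^ k - 1"
  unfolding of_int_Xm by (simp only: poly_diff poly_monom poly_1 mult_1)

lemma degree_Xm: assumes "k \<ge> 1" shows "degree (Xm k) = k"
proof (rule antisym)
  show "degree (Xm k) \<le> k" by (rule degree_le) (auto simp: coeff_Xm)
  show "k \<le> degree (Xm k)" by (rule le_degree) (use assms in \<open>auto simp: coeff_Xm\<close>)
qed

lemma lead_Xm: assumes "k \<ge> 1" shows "lead_coeff (Xm k) = 1"
  unfolding degree_Xm[OF assms] coeff_Xm using assms by auto

lemma prod_mset_root:
  "poly (of_int_poly (prod_mset A)) (z::complex) = 0 \<Longrightarrow> \<exists>p\<in>#A. poly (of_int_poly p) z = 0"
proof (induct A)
  case empty then show ?case by simp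
next
  case (add x A)
  have "poly (of_int_poly (prod_mset (add_mset x A))) z = poly (of_int_poly x) z * poly (of_int_poly (prod_mset A)) z"
    by (simp only: prod_mset.add_mset of_int_poly_hom.hom_mult poly_mult)
  then have "poly (of_int_poly x) z = 0 \<or> poly (of_int_poly (prod_mset A)) z = 0" using add(2) by simp
  then show ?case using add(1) by auto
qed

lemma exists_min_poly:
  fixes z :: complex and m :: nat
  assumes m: "m \<ge> 1" and zm: "z ^ m = 1"
  shows "\<exists>f::int poly. irreducible f \<and> lead_coeff f = 1 \<and> f dvd Xm m \<and> poly (of_int_poly f) z = 0"
proof -
  have F0: "Xm m \<noteq> 0" using lead_Xm[OF m] by auto
  from prime_factorization_exists'[OF F0] obtain A where
    A: "\<And>x. x \<in># A \<Longrightarrow> prime x" "normalize (prod_mset A) = normalize (Xm m)" by blast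
  have Fd: "Xm m dvd prod_mset A" using A(2) by (metis dvd_normalize_iff dvd_refl normalize_dvd_iff)
  have dF: "prod_mset A dvd Xm m" using A(2) by (metis dvd_normalize_iff dvd_refl normalize_dvd_iff)
  from Fd obtain k where k: "prod_mset A = Xm m * k" by (auto elim: dvdE)
  have "poly (of_int_poly (prod_mset A)) z = 0"
    unfolding k by (simp add: of_int_poly_hom.hom_mult poly_Xm zm)
  then obtain p where p: "p \<in># A" "poly (of_int_poly p) z = 0"
    using prod_mset_root by blast
  have irr: "irreducible p" by (rule prime_elem_imp_irreducible[OF prime_imp_prime_elem[OF A(1)[OF p(1)]]])
  have pd: "p dvd Xm m" using dvd_prod_mset[OF p(1)] dF by (rule dvd_trans)
  then obtain q where q: "Xm m = p * q" by (auto elim: dvdE)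
  have "lead_coeff p * lead_coeff q = 1" using arg_cong[OF q, of lead_coeff] lead_Xm[OF m]
    by (simp add: lead_coeff_mult)
  then have "lead_coeff p = 1 \<or> lead_coeff p = -1" by (auto simp add: zmult_eq_1_iff)
  then show ?thesis
  proof
    assume "lead_coeff p = 1" then show ?thesis using irr pd p by blast
  next
    assume l: "lead_coeff p = -1"
    have "irreducible ((-1) * p)" using irr by (subst irreducible_mult_unit_left) auto
    then have "irreducible (-p)" by simp
    moreover have "lead_coeff (-p) = 1" using l by simp
    moreover have "-p dvd Xm m" using pd by simp
    moreover have "poly (of_int_poly (-p)) z = 0" using p by (simp add: of_int_poly_hom.hom_uminus)
    ultimately show ?thesis by blast
  qed
qed



lemma dvd_Xm_root:
  fixes f :: "int poly" and w :: complex
  assumes "f dvd Xm m" "poly (of_int_poly f) w = 0"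
  shows "w ^ m = 1"
proof -
  have "(of_int_poly f :: complex poly) dvd of_int_poly (Xm m)"
    using assms(1) by (rule of_int_poly_hom.hom_dvd)
  then obtain k where k: "(of_int_poly (Xm m) :: complex poly) = of_int_poly f * k" by (elim dvdE)
  have "poly (of_int_poly (Xm m)) w = 0" unfolding k using assms(2) by simp
  then show ?thesis by (simp add: poly_Xm)
qed

lemma card_roots_dvd_Xm:
  fixes f :: "int poly"
  assumes fd: "f dvd Xm m" and m: "m \<ge> 1"
  shows "card {w::complex. poly (of_int_poly f) w = 0} = degree f"
proof -
  let ?F = "of_int_poly (Xm m) :: complex poly"
  let ?f = "of_int_poly f :: complex poly"
  have F0: "?F \<noteq> 0" using lead_Xm[OF m] by auto
  have fd': "?f dvd ?F" using fd by (rule of_int_poly_hom.hom_dvd)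
  have f0: "?f \<noteq> 0" using fd' F0 by auto
  have pd: "pderiv ?F = Polynomial.monom (of_nat m) (m - 1)"
    unfolding of_int_Xm by (simp add: pderiv_diff pderiv_monom)
  have "rsquarefree ?F"
    unfolding rsquarefree_roots
  proof (intro allI notI)
    fix a assume "poly ?F a = 0 \<and> poly (pderiv ?F) a = 0"
    then have a: "a ^ m = 1" "of_nat m * a ^ (m - 1) = 0"
      unfolding pd by (auto simp: poly_Xm poly_monom)
    have "a \<noteq> 0"
    proof
      assume "a = 0" then show False using a(1) m by (cases m) auto
    qed
    then show False using a(2) m by simp
  qed
  then have "rsquarefree ?f"
    unfolding rsquarefree_def'
  proof (intro conjI allI f0)
    fix a
    have "Polynomial.order a ?f \<le> Polynomial.order a ?F" by (rule dvd_imp_order_le[OF F0 fd'])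
    also have "Polynomial.order a ?F \<le> 1" using \<open>rsquarefree ?F\<close> unfolding rsquarefree_def' by blast
    finally show "Polynomial.order a ?f \<le> 1" .
  qed
  then have "card {w. poly ?f w = 0} = degree ?f" using rsquarefree_card_degree[OF f0] by simp
  then show ?thesis by simp
qed

lemma card_prim_roots:
  fixes z :: complex and R :: "complex set"
  assumes m: "m \<ge> 1" and zm: "z ^ m = 1" and zp: "\<forall>k\<in>{1..<m}. z ^ k \<noteq> 1"
    and R: "\<forall>w\<in>R. w ^ m = 1 \<and> (\<forall>k\<in>{1..<m}. w ^ k \<noteq> 1)"
  shows "card R \<le> totient m"
proof -
  have z0: "z \<noteq> 0"
  proof
    assume "z = 0" then show False using zm m by (cases m) auto
  qed
  define S where "S = (\<lambda>j. z ^ j) ` {1..m}"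
  have inj: "inj_on (\<lambda>j. z ^ j) {1..m}"
  proof (rule inj_onI)
    fix i j assume i: "i \<in> {1..m}" and j: "j \<in> {1..m}" and e: "z ^ i = z ^ j"
    show "i = j"
    proof (rule ccontr)
      assume "i \<noteq> j"
      then consider "i < j" | "j < i" by linarith
      then show False
      proof cases
        case 1
        have "z ^ j = z ^ i * z ^ (j - i)" using 1 by (simp add: power_add[symmetric])
        then have "z ^ (j - i) = 1" using e z0 by simp
        moreover have "j - i \<in> {1..<m}" using 1 i j by auto
        ultimately show False using zp by blast
      next
        case 2
        have "z ^ i = z ^ j * z ^ (i - j)" using 2 by (simp add: power_add[symmetric])
        then have "z ^ (i - j) = 1" using e z0 by simp
        moreover have "i - j \<in> {1..<m}" using 2 i j by auto
        ultimately show False using zp by blast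
      qed
    qed
  qed
  have cS: "card S = m" unfolding S_def using card_image[OF inj] by simp
  define U where "U = {w::complex. poly (of_int_poly (Xm m)) w = 0}"
  have U: "U = {w. w ^ m = 1}" unfolding U_def by (simp add: poly_Xm)
  have X0: "(of_int_poly (Xm m) :: complex poly) \<noteq> 0" using lead_Xm[OF m] by auto
  have fU: "finite U" unfolding U_def by (rule poly_roots_finite[OF X0])
  have cU: "card U \<le> m" unfolding U_def using card_poly_roots_bound[OF X0] by (simp add: degree_Xm[OF m])
  have SU: "S \<subseteq> U"
  proof
    fix x assume "x \<in> S"
    then obtain j where x: "x = z ^ j" unfolding S_def by auto
    have "(z ^ j) ^ m = (z ^ m) ^ j" by (simp add: power_mult[symmetric] mult.commute)
    then show "x \<in> U" unfolding U x by (simp add: zm)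
  qed
  have SeU: "S = U" by (rule card_subset_eq[OF fU SU]) (use cS cU card_mono[OF fU SU] in auto)
  define J where "J w = (SOME j. j \<in> {1..m} \<and> w = z ^ j)" for w
  have J: "J w \<in> {1..m} \<and> w = z ^ J w" if "w \<in> R" for w
  proof -
    have "w \<in> S" using that R SeU U by auto
    then have "\<exists>j. j \<in> {1..m} \<and> w = z ^ j" unfolding S_def by auto
    then show ?thesis unfolding J_def by (rule someI_ex)
  qed
  have Jt: "J w \<in> totatives m" if w: "w \<in> R" for w
  proof -
    define j where "j = J w"
    have j: "j \<in> {1..m}" "w = z ^ j" using J[OF w] unfolding j_def by auto
    have "algebraic_semidom_class.coprime j m"
    proof (rule ccontr)
      assume nc: "\<not> algebraic_semidom_class.coprime j m"
      define g where "g = gcd j m"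
      have g1: "g \<noteq> 1" using nc coprime_iff_gcd_eq_1[of j m] unfolding g_def by blast
      have gp: "g > 0" unfolding g_def using m gcd_pos_nat[of j m] by linarith
      have gm: "g dvd m" and gj: "g dvd j" unfolding g_def by (rule gcd_dvd2, rule gcd_dvd1)
      obtain k where km: "m = g * k" using gm by (elim dvdE)
      obtain j' where jj: "j = g * j'" using gj by (elim dvdE)
      have k1: "k \<ge> 1" using km m by (cases k) auto
      have g2: "g \<ge> 2" using g1 gp by linarith
      have "1 * k < g * k" using g2 k1 by (intro mult_strict_right_mono) auto
      then have kl: "k < m" using km by simp
      have "w ^ k = (z ^ j) ^ k" using j by simp
      also have "\<dots> = z ^ (j * k)" by (rule power_mult[symmetric])
      also have "j * k = m * j'" unfolding jj km by (simp only: ac_simps)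
      also have "z ^ (m * j') = (z ^ m) ^ j'" by (rule power_mult)
      also have "\<dots> = 1" by (simp only: zm power_one)
      finally have "w ^ k = 1" .
      moreover have "k \<in> {1..<m}" using k1 kl by simp
      ultimately show False using R w by blast
    qed
    moreover have "j > 0" using j by simp
    moreover have "j \<le> m" using j by simp
    ultimately show ?thesis unfolding j_def totatives_def by simp
  qed
  have "inj_on J R"
  proof (rule inj_onI)
    fix v w assume "v \<in> R" "w \<in> R" "J v = J w"
    then show "v = w" using J[of v] J[of w] by simp
  qed
  then have "card R \<le> card (totatives m)"
    by (rule card_inj_on_le) (use Jt in auto)
  then show ?thesis unfolding totient_def .
qed



lemma dvd_root:
  fixes f p :: "int poly" and w :: complex
  assumes "f dvd p" "poly (of_int_poly f) w = 0"
  shows "poly (of_int_poly p) w = 0"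
proof -
  have "(of_int_poly f :: complex poly) dvd of_int_poly p"
    using assms(1) by (rule of_int_poly_hom.hom_dvd)
  then obtain k where k: "(of_int_poly p :: complex poly) = of_int_poly f * k" by (elim dvdE)
  show ?thesis unfolding k using assms(2) by simp
qed

lemma horner_sum: "horner cs w = (\<Sum>i<length cs. cs ! i * w ^ i)"
proof (induct cs)
  case Nil then show ?case by simp
next
  case (Cons c cs)
  have "horner (c # cs) w = c + w * (\<Sum>i<length cs. cs ! i * w ^ i)" using Cons by simp
  also have "\<dots> = (\<Sum>i<Suc (length cs). (c # cs) ! i * w ^ i)"
    by (subst sum.lessThan_Suc_shift) (simp add: sum_distrib_left algebra_simps)
  finally show ?case by simp
qed

lemma poly_of_int_sum:
  "poly (of_int_poly (\<Sum>i<n. Polynomial.monom (c i) i)) (w::complex) = (\<Sum>i<n. of_int (c i) * w ^ i)"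
proof (induct n)
  case 0 then show ?case by simp
next
  case (Suc n)
  have "(of_int_poly (\<Sum>i<Suc n. Polynomial.monom (c i) i) :: complex poly)
      = of_int_poly (\<Sum>i<n. Polynomial.monom (c i) i) + of_int_poly (Polynomial.monom (c n) n)"
    by (simp add: of_int_poly_hom.hom_add)
  then show ?case using Suc by (simp add: map_poly_monom poly_monom)
qed

theorem mainTheorem8:
  fixes m :: nat and A :: int and z :: complex and a b :: "nat \<Rightarrow> int"
  assumes "m \<ge> 1" and "A \<ge> 1"
    and "z ^ m = 1" and "\<forall>k\<in>{1..<m}. z ^ k \<noteq> 1"
    and "\<forall>i<totient m. \<bar>a i\<bar> \<le> A"
    and "\<forall>i<totient m. \<bar>b i\<bar> \<le> A"
    and "cyc_elem m z a \<noteq> cyc_elem m z b"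
  shows "norm (cyc_elem m z a - cyc_elem m z b)
           \<ge> 1 / (2 * real_of_int A * real (totient m) + 1) ^ (totient m - 1)"
proof -
  note m = assms(1) and A1 = assms(2) and zm = assms(3) and zp = assms(4)
  define n where "n = totient m"
  define c where "c i = a i - b i" for i
  define g where "g w = (\<Sum>i<n. of_int (c i) * w ^ i)" for w :: complex
  define Cp :: "int poly" where "Cp = (\<Sum>i<n. Polynomial.monom (c i) i)"
  define cs :: "complex list" where "cs = map (\<lambda>i. of_int (c i)) [0..<n]"
  define B :: real where "B = 2 * real_of_int A * real n + 1"
  have n1: "n \<ge> 1" unfolding n_def using m by (simp add: Suc_le_eq)
  have diff: "cyc_elem m z a - cyc_elem m z b = g z"
    unfolding cyc_elem_def g_def n_def c_def by (simp add: sum_subtractf[symmetric] algebra_simps)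
  have polyC: "poly (of_int_poly Cp) w = g w" for w
    unfolding Cp_def g_def by (rule poly_of_int_sum)
  have hornerC: "horner cs w = g w" for w
    unfolding horner_sum cs_def g_def by simp
  have csI: "set cs \<subseteq> \<int>" unfolding cs_def by auto
  have gz: "g z \<noteq> 0"
  proof
    assume "g z = 0"
    then have "cyc_elem m z a - cyc_elem m z b = 0" using diff by simp
    then show False using assms(7) by simp
  qed
  obtain f where f: "irreducible f" "lead_coeff f = 1" "f dvd Xm m" "poly (of_int_poly f) z = 0"
    using exists_min_poly[OF m zm] by blast
  define R where "R = {w::complex. poly (of_int_poly f) w = 0}"
  have fc0: "(of_int_poly f :: complex poly) \<noteq> 0" using f(2) by auto
  have fR: "finite R" unfolding R_def by (rule poly_roots_finite[OF fc0])
  have zR: "z \<in> R" unfolding R_def using f(4) by simp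
  have Rm: "w ^ m = 1" if "w \<in> R" for w
    using dvd_Xm_root[OF f(3)] that unfolding R_def by simp
  have Rp: "\<forall>k\<in>{1..<m}. w ^ k \<noteq> 1" if w: "w \<in> R" for w
  proof (intro ballI notI)
    fix k assume k: "k \<in> {1..<m}" and wk: "w ^ k = 1"
    have "poly (of_int_poly (Xm k)) w = 0" using wk by (simp add: poly_Xm)
    then have "f dvd Xm k" using irr_common_root[OF f(1)] w unfolding R_def by blast
    then have "z ^ k = 1" using dvd_Xm_root f(4) by blast
    then show False using zp k by blast
  qed
  have Rg: "g w \<noteq> 0" if w: "w \<in> R" for w
  proof
    assume "g w = 0"
    then have "poly (of_int_poly Cp) w = 0" by (simp add: polyC)
    then have "f dvd Cp" using irr_common_root[OF f(1)] w unfolding R_def by blast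
    then have "poly (of_int_poly Cp) z = 0" using dvd_root f(4) by blast
    then show False using gz by (simp add: polyC)
  qed
  have cardR: "card R = degree f" unfolding R_def by (rule card_roots_dvd_Xm[OF f(3) m])
  have cardRn: "card R \<le> n" unfolding n_def
    by (rule card_prim_roots[OF m zm zp]) (use Rm Rp in blast)
  obtain ws where ws: "set ws = R" "distinct ws" using finite_distinct_list[OF fR] by blast
  have len: "length ws = degree f" using distinct_card[OF ws(2)] ws(1) cardR by simp
  have Pint: "prod_list (map (horner cs) ws) \<in> \<int>"
    by (rule prod_roots_int[OF f(2) ws(2) len _ csI]) (use ws(1) R_def in auto)
  have Peq: "prod_list (map (horner cs) ws) = (\<Prod>w\<in>R. g w)"
    unfolding ws(1)[symmetric] prod.distinct_set_conv_list[OF ws(2)] hornerC ..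
  have P0: "(\<Prod>w\<in>R. g w) \<noteq> 0" using fR Rg by simp
  have P1: "1 \<le> norm (\<Prod>w\<in>R. g w)"
  proof -
    from Pint[unfolded Peq] obtain k where k: "(\<Prod>w\<in>R. g w) = of_int k" by (elim Ints_cases)
    then have "k \<noteq> 0" using P0 by auto
    then show ?thesis unfolding k by simp
  qed
  have gb: "norm (g w) \<le> B" if w: "w \<in> R" for w
  proof -
    have "norm w ^ m = 1" using Rm[OF w] by (metis norm_one norm_power)
    then have nw: "norm w = 1" using power_eq_iff_eq_base[of m "norm w" 1] m by simp
    have "norm (g w) \<le> (\<Sum>i<n. norm (of_int (c i) * w ^ i))" unfolding g_def by (rule norm_sum)
    also have "\<dots> = (\<Sum>i<n. real_of_int \<bar>c i\<bar>)"
      by (intro sum.cong refl) (simp add: norm_mult norm_power nw)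
    also have "\<dots> \<le> (\<Sum>i<n. 2 * real_of_int A)"
    proof (intro sum_mono)
      fix i assume "i \<in> {..<n}"
      then have "\<bar>a i\<bar> \<le> A" "\<bar>b i\<bar> \<le> A" using assms(5,6) unfolding n_def by auto
      then show "real_of_int \<bar>c i\<bar> \<le> 2 * real_of_int A" unfolding c_def by linarith
    qed
    also have "\<dots> = 2 * real_of_int A * real n" by simp
    also have "\<dots> \<le> B" unfolding B_def by simp
    finally show ?thesis .
  qed
  have B1: "B \<ge> 1" unfolding B_def using A1 by simp
  have "norm (\<Prod>w\<in>R. g w) = (\<Prod>w\<in>R. norm (g w))" by (simp add: prod_norm)
  also have "\<dots> = norm (g z) * (\<Prod>w\<in>R - {z}. norm (g w))" using fR zR by (simp add: prod.remove)
  also have "(\<Prod>w\<in>R - {z}. norm (g w)) \<le> B ^ (n - 1)"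
  proof (rule prod_le_power)
    show "card (R - {z}) \<le> n - 1" using cardRn fR zR by simp
  qed (use gb B1 in auto)
  then have "norm (g z) * (\<Prod>w\<in>R - {z}. norm (g w)) \<le> norm (g z) * B ^ (n - 1)"
    by (rule mult_left_mono) simp
  finally have "1 \<le> norm (g z) * B ^ (n - 1)" using P1 by linarith
  moreover have "B ^ (n - 1) > 0" using B1 by simp
  ultimately have "1 / B ^ (n - 1) \<le> norm (g z)" by (simp add: divide_le_eq mult.commute)
  then show ?thesis unfolding diff B_def n_def .
qed


end
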